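(* Let $M$ and $N$ be MV-algebras. (1) For every probability map $p\colon M\to N$, the dual map $p'\colon\operatorname{Max}N\to\operatorname{St}M$ is continuous. (2) If $N$ is semisimple, then the assignment $p\mapsto p'$ is a bijection from the set of probability maps $M\to N$ onto the set of their duals.
   Context: For an MV-algebra $(M,\oplus,\neg,0)$: $1\coloneqq\neg 0$, $a\odot b\coloneqq \neg(\neg a\oplus\neg b)$, $a\vee b\coloneqq\neg(\neg a\oplus b)\oplus b$, $a\wedge b\coloneqq\neg(\neg a\vee\neg b)$. A probability map is a function $p\colon M\to N$ between MV-algebras such that for all $a,b\in M$: (P1) $p(a\oplus b)=p(a)\oplus p(b\wedge\neg a)$; (P2) $p(\neg a)=\neg p(a)$; (P3) $p(1)=1$. A state of $M$ is a map $s\colon M\to[0,1]$ with $s(1)=1$ and $s(a\oplus b)=s(a)+s(b)$ whenever $a\odot b=0$; $\operatorname{St}M$ is the set of states with the topology of pointwise convergence (subspace of $[0,1]^M$). $\operatorname{Max}N$ is the compact Hausdorff space of maximal ideals of $N$; for $\mathfrak{n}\in\operatorname{Max}N$ let $h_{\mathfrak{n}}$ be the unique MV-isomorphism of $N/\mathfrak{n}$ onto a subalgebra of $[0,1]$ and $b^*(\mathfrak{n})\coloneqq h_{\mathfrak{n}}(b/\mathfrak{n})$ for $b\in N$ (so $b^*$ is continuous and $b\mapsto b^*$ is an MV-homomorphism). The dual of a probability map $p\colon M\to N$ is $p'\colon \operatorname{Max}N\to\operatorname{St}M$, $p'(\mathfrak{n})(a)\coloneqq p(a)^*(\mathfrak{n})$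 for $a\in M$. $N$ is semisimple if the intersection of its maximal ideals is $\{0\}$. *)

theory Defs
  imports "HOL-Analysis.Analysis"
begin

record 'a mv =
  mv_add :: "'a \<Rightarrow> 'a \<Rightarrow> 'a"
  mv_neg :: "'a \<Rightarrow> 'a"
  mv_zero :: "'a"

definition mv_algebra :: "'a mv \<Rightarrow> bool" where
  "mv_algebra M \<longleftrightarrow>
     (\<forall>x y z. mv_add M (mv_add M x y) z = mv_add M x (mv_add M y z)) \<and>
     (\<forall>x y. mv_add M x y = mv_add M y x) \<and>
     (\<forall>x. mv_add M x (mv_zero M) = x) \<and>
     (\<forall>x. mv_neg M (mv_neg M x) = x) \<and>
     (\<forall>x. mv_add M x (mv_neg M (mv_zero M)) = mv_neg M (mv_zero M)) \<and>
     (\<forall>x y. mv_add M (mv_neg M (mv_add M (mv_neg M x) y)) y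
            = mv_add M (mv_neg M (mv_add M (mv_neg M y) x)) x)"

definition mv_one :: "'a mv \<Rightarrow> 'a" where
  "mv_one M = mv_neg M (mv_zero M)"

definition mv_odot :: "'a mv \<Rightarrow> 'a \<Rightarrow> 'a \<Rightarrow> 'a" where
  "mv_odot M a b = mv_neg M (mv_add M (mv_neg M a) (mv_neg M b))"

definition mv_sup :: "'a mv \<Rightarrow> 'a \<Rightarrow> 'a \<Rightarrow> 'a" where
  "mv_sup M a b = mv_add M (mv_neg M (mv_add M (mv_neg M a) b)) b"

definition mv_inf :: "'a mv \<Rightarrow> 'a \<Rightarrow> 'a \<Rightarrow> 'a" where
  "mv_inf M a b = mv_neg M (mv_sup M (mv_neg M a) (mv_neg M b))"

definition mv_le :: "'a mv \<Rightarrow> 'a \<Rightarrow> 'a \<Rightarrow> bool" where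
  "mv_le M a b \<longleftrightarrow> mv_add M (mv_neg M a) b = mv_one M"

definition prob_map :: "'a mv \<Rightarrow> 'b mv \<Rightarrow> ('a \<Rightarrow> 'b) \<Rightarrow> bool" where
  "prob_map M N p \<longleftrightarrow>
     (\<forall>a b. p (mv_add M a b) = mv_add N (p a) (p (mv_inf M b (mv_neg M a)))) \<and>
     (\<forall>a. p (mv_neg M a) = mv_neg N (p a)) \<and>
     p (mv_one M) = mv_one N"

text \<open>States and the state space (topology: pointwise convergence, i.e. the
  subspace topology of the product topology on functions 'a => real).\<close>
definition mv_state :: "'a mv \<Rightarrow> ('a \<Rightarrow> real) \<Rightarrow> bool" where
  "mv_state M s \<longleftrightarrow>
     (\<forall>a. 0 \<le> s a \<and> s a \<le> 1) \<and> s (mv_one M) = 1 \<and>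
     (\<forall>a b. mv_odot M a b = mv_zero M \<longrightarrow> s (mv_add M a b) = s a + s b)"

definition St :: "'a mv \<Rightarrow> ('a \<Rightarrow> real) set" where
  "St M = {s. mv_state M s}"

definition mv_ideal :: "'a mv \<Rightarrow> 'a set \<Rightarrow> bool" where
  "mv_ideal M I \<longleftrightarrow> mv_zero M \<in> I \<and>
     (\<forall>a b. b \<in> I \<and> mv_le M a b \<longrightarrow> a \<in> I) \<and>
     (\<forall>a\<in>I. \<forall>b\<in>I. mv_add M a b \<in> I)"

definition mv_max_ideal :: "'a mv \<Rightarrow> 'a set \<Rightarrow> bool" where
  "mv_max_ideal M I \<longleftrightarrow> mv_ideal M I \<and> I \<noteq> UNIV \<and>
     (\<forall>J. mv_ideal M J \<and> I \<subseteq> J \<longrightarrow> J = I \<or> J = UNIV)"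

definition MaxSpec :: "'a mv \<Rightarrow> 'a set set" where
  "MaxSpec M = {I. mv_max_ideal M I}"

definition MaxTop :: "'a mv \<Rightarrow> 'a set topology" where
  "MaxTop M = topology_generated_by
     (insert (MaxSpec M) {{m \<in> MaxSpec M. a \<notin> m} | a. True})"

definition semisimple :: "'a mv \<Rightarrow> bool" where
  "semisimple M \<longleftrightarrow> \<Inter> (MaxSpec M) = {mv_zero M}"

definition mv_hom_unit :: "'a mv \<Rightarrow> ('a \<Rightarrow> real) \<Rightarrow> bool" where
  "mv_hom_unit M h \<longleftrightarrow>
     (\<forall>x. 0 \<le> h x \<and> h x \<le> 1) \<and> h (mv_zero M) = 0 \<and>
     (\<forall>x y. h (mv_add M x y) = min 1 (h x + h y)) \<and>
     (\<forall>x. h (mv_neg M x) = 1 - h x)"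

text \<open>b*(m) = h_m(b/m): the unique homomorphism N -> [0,1] with kernel m
  (= h_m composed with the projection N -> N/m), evaluated at b.\<close>
definition mv_star :: "'a mv \<Rightarrow> 'a \<Rightarrow> 'a set \<Rightarrow> real" where
  "mv_star M b m = (THE h. mv_hom_unit M h \<and> {x. h x = 0} = m) b"

definition dual :: "'b mv \<Rightarrow> ('a \<Rightarrow> 'b) \<Rightarrow> 'b set \<Rightarrow> ('a \<Rightarrow> real)" where
  "dual N p = restrict (\<lambda>m. \<lambda>a. mv_star N (p a) m) (MaxSpec N)"

end

theory Submission
  imports Defs
begin
locale mva =
  fixes A :: "'a mv"
  assumes mv: "mv_algebra A"
begin

abbreviation ad (infixl "\<oplus>" 65) where "x \<oplus> y \<equiv> mv_add A x y"
abbreviation ng where "ng x \<equiv> mv_neg A x"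
abbreviation zr where "zr \<equiv> mv_zero A"
abbreviation on where "on \<equiv> ng zr"
abbreviation od (infixl "\<odot>" 70) where "x \<odot> y \<equiv> ng (ng x \<oplus> ng y)"
abbreviation jn where "jn x y \<equiv> ng (ng x \<oplus> y) \<oplus> y"
abbreviation mt where "mt x y \<equiv> ng (jn (ng x) (ng y))"
abbreviation lq where "lq x y \<equiv> ng x \<oplus> y = on"

lemma assoc: "x \<oplus> y \<oplus> z = x \<oplus> (y \<oplus> z)" using mv unfolding mv_algebra_def by blast
lemma comm: "x \<oplus> y = y \<oplus> x" using mv unfolding mv_algebra_def by blast
lemma zr_r[simp]: "x \<oplus> zr = x" using mv unfolding mv_algebra_def by blast
lemma nn[simp]: "ng (ng x) = x" using mv unfolding mv_algebra_def by blast
lemma on_r[simp]: "x \<oplus> on = on" using mv unfolding mv_algebra_def by blast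
lemma ax6: "jn x y = jn y x" using mv unfolding mv_algebra_def by blast

lemma lcomm: "x \<oplus> (y \<oplus> z) = y \<oplus> (x \<oplus> z)"
proof -
  have "x \<oplus> (y \<oplus> z) = (x \<oplus> y) \<oplus> z" by (simp only: assoc)
  also have "\<dots> = (y \<oplus> x) \<oplus> z" by (simp only: comm[of x y])
  finally show ?thesis by (simp only: assoc)
qed
lemmas ac = assoc comm lcomm

lemma zr_l[simp]: "zr \<oplus> x = x" using comm[of zr x] by simp
lemma on_l[simp]: "on \<oplus> x = on" using comm[of on x] by simp
lemma ng_on: "ng on = zr" by simp
lemma ng_inj[simp]: "(ng x = ng y) = (x = y)" by (metis nn)
lemma compl[simp]: "x \<oplus> ng x = on"
proof -
  have "jn x on = jn on x" by (rule ax6)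
  then show ?thesis by (simp add: comm)
qed
lemma compl2[simp]: "ng x \<oplus> x = on" using comm[of "ng x" x] by simp
lemma compl3[simp]: "x \<oplus> (ng x \<oplus> y) = on" by (simp add: assoc[symmetric])
lemma compl4[simp]: "ng x \<oplus> (x \<oplus> y) = on" by (simp add: assoc[symmetric])

lemma od_comm: "x \<odot> y = y \<odot> x" by (simp add: comm)
lemma od_assoc: "x \<odot> y \<odot> z = x \<odot> (y \<odot> z)" by (simp add: assoc)
lemma od_zr[simp]: "x \<odot> zr = zr" by simp
lemma od_on[simp]: "x \<odot> on = x" by simp

lemma lq_refl[simp]: "lq x x" by simp
lemma lq_ex: "lq x y \<longleftrightarrow> (\<exists>c. x \<oplus> c = y)"
proof
  assume "lq x y"
  then have "jn x y = y" by simp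
  then have "jn y x = y" by (simp add: ax6)
  then have "y = x \<oplus> (y \<odot> ng x)" by (simp add: comm)
  then show "\<exists>c. x \<oplus> c = y" by (intro exI[where x="y \<odot> ng x"]) (rule sym)
next
  assume "\<exists>c. x \<oplus> c = y"
  then show "lq x y" by auto
qed
lemma lq_add[simp]: "lq x (x \<oplus> c)" by simp
lemma lq_add2[simp]: "lq x (c \<oplus> x)" by (simp add: lcomm)
lemma lq_trans: "lq x y \<Longrightarrow> lq y z \<Longrightarrow> lq x z"
proof -
  assume "lq x y" "lq y z"
  then obtain c d where "y = x \<oplus> c" "z = y \<oplus> d" unfolding lq_ex by metis
  then have "z = x \<oplus> (c \<oplus> d)" by (simp add: assoc)
  then show ?thesis by simp
qed
lemma lq_antisym: "lq x y \<Longrightarrow> lq y x \<Longrightarrow> x = y"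
proof -
  assume a: "lq x y" "lq y x"
  have "jn x y = y" using a(1) by simp
  moreover have "jn y x = x" using a(2) by simp
  ultimately show ?thesis using ax6[of x y] by simp
qed
lemma lq_mono: "lq x y \<Longrightarrow> lq (x \<oplus> z) (y \<oplus> z)"
proof -
  assume "lq x y"
  then obtain c where "y = x \<oplus> c" unfolding lq_ex by metis
  then have "y \<oplus> z = (x \<oplus> z) \<oplus> c" by (simp add: ac)
  then show ?thesis by simp
qed
lemma lq_mono_l: "lq x y \<Longrightarrow> lq (z \<oplus> x) (z \<oplus> y)"
  using lq_mono[of x y z] by (simp add: comm)
lemma lq_mono2: "lq x y \<Longrightarrow> lq x' y' \<Longrightarrow> lq (x \<oplus> x') (y \<oplus> y')"
  by (meson lq_mono lq_mono_l lq_trans)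
lemma lq_ng: "lq x y \<Longrightarrow> lq (ng y) (ng x)" by (simp add: comm)
lemma lq_ng_iff: "lq (ng y) (ng x) = lq x y" by (simp add: comm)
lemma lq_on[simp]: "lq x on" by simp
lemma lq_zr[simp]: "lq zr x" by simp
lemma on_lq: "lq on x \<Longrightarrow> x = on" by (simp)
lemma lq_resid: "lq (x \<odot> ng z) a \<longleftrightarrow> lq x (a \<oplus> z)"
  by (simp add: ac)
lemma lq_od_mono: "lq x y \<Longrightarrow> lq (x \<odot> z) (y \<odot> z)"
proof -
  assume "lq x y"
  then have "lq (ng y) (ng x)" by (rule lq_ng)
  then have "lq (ng y \<oplus> ng z) (ng x \<oplus> ng z)" by (rule lq_mono)
  then show ?thesis by (rule lq_ng)
qed
lemma od_lq: "lq (x \<odot> y) y"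
proof -
  have "lq (ng y) (ng x \<oplus> ng y)" by (rule lq_add2)
  then show ?thesis using lq_ng[of "ng y" "ng x \<oplus> ng y"] by simp
qed
lemma od_lq1: "lq (x \<odot> y) x"
  using od_lq[of y x] by (simp add: comm)
lemma lq_zr_iff: "lq x y \<longleftrightarrow> x \<odot> ng y = zr"
  by (metis nn)

lemma jn_ub2: "lq y (jn x y)" by (rule lq_add2)
lemma jn_ub1: "lq x (jn x y)" using jn_ub2[of x y] ax6[of x y] by metis
lemma jn_eq: "lq x y \<Longrightarrow> jn x y = y" by simp
lemma jn_mono: "lq x z \<Longrightarrow> lq (jn x y) (jn z y)"
proof -
  assume "lq x z"
  then have "lq (x \<odot> ng y) (z \<odot> ng y)" by (rule lq_od_mono)
  then show ?thesis using lq_mono[of "x \<odot> ng y" "z \<odot> ng y" y] by simp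
qed
lemma jn_lub: "lq x z \<Longrightarrow> lq y z \<Longrightarrow> lq (jn x y) z"
proof -
  assume a: "lq x z" "lq y z"
  have "lq (jn x y) (jn z y)" by (rule jn_mono[OF a(1)])
  also have "jn z y = jn y z" by (rule ax6)
  also have "\<dots> = z" using a(2) by simp
  finally show ?thesis .
qed
lemma mt_lb1: "lq (mt x y) x" using lq_ng[OF jn_ub1[of "ng x" "ng y"]] by simp
lemma mt_lb2: "lq (mt x y) y" using lq_ng[OF jn_ub2[of "ng y" "ng x"]] by (simp only: nn)
lemma mt_glb: "lq z x \<Longrightarrow> lq z y \<Longrightarrow> lq z (mt x y)"
proof -
  assume a: "lq z x" "lq z y"
  have "lq (jn (ng x) (ng y)) (ng z)" by (rule jn_lub; rule lq_ng; fact)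
  from lq_ng[OF this] show ?thesis by simp
qed
lemma mt_comm: "mt x y = mt y x" using ax6[of "ng x" "ng y"] by simp
lemma mt_eq: "lq x y \<Longrightarrow> mt x y = x"
proof -
  assume "lq x y"
  then have "lq (ng y) (ng x)" by (rule lq_ng)
  then have "jn (ng y) (ng x) = ng x" by (rule jn_eq)
  then have e: "jn (ng x) (ng y) = ng x" by (simp only: ax6)
  show ?thesis by (subst e) (rule nn)
qed
lemma I2: "(a \<oplus> c) \<odot> ng c = mt a (ng c)" by simp
lemma I1: "(a \<odot> ng c) \<oplus> c = jn a c" by simp

lemma D1: "a \<oplus> mt b c = mt (a \<oplus> b) (a \<oplus> c)"
proof (rule lq_antisym)
  show "lq (a \<oplus> mt b c) (mt (a \<oplus> b) (a \<oplus> c))"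
    by (intro mt_glb lq_mono_l mt_lb1 mt_lb2)
  have "lq ((mt (a \<oplus> b) (a \<oplus> c)) \<odot> ng a) (mt b c)"
  proof (rule mt_glb)
    have "lq ((mt (a \<oplus> b) (a \<oplus> c)) \<odot> ng a) ((a \<oplus> b) \<odot> ng a)"
      by (rule lq_od_mono) (rule mt_lb1)
    also have "(a \<oplus> b) \<odot> ng a = mt b (ng a)" by (simp add: comm)
    finally show "lq ((mt (a \<oplus> b) (a \<oplus> c)) \<odot> ng a) b" using mt_lb1 lq_trans by blast
    have "lq ((mt (a \<oplus> b) (a \<oplus> c)) \<odot> ng a) ((a \<oplus> c) \<odot> ng a)"
      by (rule lq_od_mono) (rule mt_lb2)
    also have "(a \<oplus> c) \<odot> ng a = mt c (ng a)" by (simp add: comm)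
    finally show "lq ((mt (a \<oplus> b) (a \<oplus> c)) \<odot> ng a) c" using mt_lb1 lq_trans by blast
  qed
  then have "lq (mt (a \<oplus> b) (a \<oplus> c)) (mt b c \<oplus> a)"
    by (simp only: lq_resid)
  then show "lq (mt (a \<oplus> b) (a \<oplus> c)) (a \<oplus> mt b c)"
    using comm[of "mt b c" a] by metis
qed

end

context mva begin

lemma lq_zr_eq: "lq x zr \<Longrightarrow> x = zr" by (metis lq_antisym lq_zr)
lemma jn_zr[simp]: "jn zr t = t" by simp

lemma D2: "a \<odot> jn b c = jn (a \<odot> b) (a \<odot> c)"
proof -
  have "ng a \<oplus> mt (ng b) (ng c) = mt (ng a \<oplus> ng b) (ng a \<oplus> ng c)" by (rule D1)
  then show ?thesis by simp
qed

lemma P1: "mt (x \<odot> ng y) (y \<odot> ng x) = zr"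
proof -
  define w where "w = mt x y"
  have wx: "lq w x" unfolding w_def by (rule mt_lb1)
  have wy: "lq w y" unfolding w_def by (rule mt_lb2)
  have e1: "x \<odot> ng w = x \<odot> ng y"
  proof -
    have "x \<odot> ng w = x \<odot> jn (ng x) (ng y)" unfolding w_def by simp
    also have "\<dots> = jn (x \<odot> ng x) (x \<odot> ng y)" by (rule D2)
    also have "\<dots> = x \<odot> ng y" by simp
    finally show ?thesis .
  qed
  have e2: "y \<odot> ng w = y \<odot> ng x"
  proof -
    have "y \<odot> ng w = y \<odot> jn (ng y) (ng x)" unfolding w_def by (metis ax6 nn)
    also have "\<dots> = jn (y \<odot> ng y) (y \<odot> ng x)" by (rule D2)
    also have "\<dots> = y \<odot> ng x" by simp
    finally show ?thesis .
  qed
  define p where "p = x \<odot> ng w"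
  define q where "q = y \<odot> ng w"
  have "p \<oplus> w = jn x w" unfolding p_def by (rule I1)
  also have "\<dots> = jn w x" by (rule ax6)
  also have "\<dots> = x" by (rule jn_eq[OF wx])
  finally have xp: "x = p \<oplus> w" by (rule sym)
  have "q \<oplus> w = jn y w" unfolding q_def by (rule I1)
  also have "\<dots> = jn w y" by (rule ax6)
  also have "\<dots> = y" by (rule jn_eq[OF wy])
  finally have yq: "y = q \<oplus> w" by (rule sym)
  have "w = mt x y" by (rule w_def)
  also have "\<dots> = mt (p \<oplus> w) (q \<oplus> w)" by (simp only: xp[symmetric] yq[symmetric])
  also have "\<dots> = mt (w \<oplus> p) (w \<oplus> q)" by (simp only: comm[of p w] comm[of q w])
  also have "\<dots> = w \<oplus> mt p q" by (rule D1[symmetric])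
  finally have ww: "w = w \<oplus> mt p q" .
  define r where "r = mt p q"
  have "lq r (ng w)" unfolding r_def p_def using lq_trans[OF mt_lb1[of "x \<odot> ng w" q] od_lq[of x "ng w"]] .
  then have "r = mt r (ng w)" by (rule mt_eq[symmetric])
  also have "\<dots> = (r \<oplus> w) \<odot> ng w" by (rule I2[symmetric])
  also have "r \<oplus> w = w"
  proof -
    have "r \<oplus> w = w \<oplus> r" by (rule comm)
    also have "\<dots> = w" unfolding r_def by (rule ww[symmetric])
    finally show ?thesis .
  qed
  finally have "r = zr" by simp
  then have "mt p q = zr" unfolding r_def .
  then show ?thesis unfolding p_def q_def e1 e2 .
qed

lemma P2: "lq (mt u (v \<oplus> w)) (mt u v \<oplus> w)"
proof -
  have "lq (mt u (v \<oplus> w) \<odot> ng w) (mt u v)"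
  proof (rule mt_glb)
    show "lq (mt u (v \<oplus> w) \<odot> ng w) u" by (metis lq_trans mt_lb1 od_lq1)
    have "lq (mt u (v \<oplus> w) \<odot> ng w) ((v \<oplus> w) \<odot> ng w)" by (metis lq_od_mono mt_lb2)
    also have "(v \<oplus> w) \<odot> ng w = mt v (ng w)" by (rule I2)
    finally show "lq (mt u (v \<oplus> w) \<odot> ng w) v" by (metis lq_trans mt_lb1)
  qed
  from lq_resid[THEN iffD1, OF this] show ?thesis .
qed

lemma P2': "mt u v = zr \<Longrightarrow> lq (mt u (v \<oplus> w)) (mt u w)"
proof -
  assume h: "mt u v = zr"
  have "lq (mt u (v \<oplus> w)) w" using P2[of u v w] h by simp
  then show ?thesis by (rule mt_glb[OF mt_lb1])
qed

fun nm :: "nat \<Rightarrow> 'a \<Rightarrow> 'a" where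
  "nm 0 x = zr" | "nm (Suc n) x = nm n x \<oplus> x"

lemma nm_add: "nm (n + k) x = nm n x \<oplus> nm k x"
  by (induction k) (auto simp: ac)
lemma nm_mono: "n \<le> k \<Longrightarrow> lq (nm n x) (nm k x)"
  by (metis le_Suc_ex lq_add nm_add)
lemma mt_nm: "mt u v = zr \<Longrightarrow> mt u (nm n v) = zr"
proof (induction n)
  case 0 then show ?case by (simp add: mt_eq)
next
  case (Suc n)
  have "lq (mt u (v \<oplus> nm n v)) (mt u (nm n v))" by (rule P2'[OF Suc.prems])
  then show ?case using Suc by (simp add: comm lq_zr_eq)
qed
lemma mt_nm2: "mt u v = zr \<Longrightarrow> mt (nm n u) (nm n v) = zr"
proof -
  assume "mt u v = zr"
  then have "mt u (nm n v) = zr" by (rule mt_nm)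
  then have "mt (nm n v) u = zr" using mt_comm[of u "nm n v"] by simp
  then have "mt (nm n v) (nm n u) = zr" by (rule mt_nm)
  then show ?thesis using mt_comm[of "nm n v" "nm n u"] by simp
qed

lemma lq_iff_mv_le: "mv_le A a b \<longleftrightarrow> lq a b" by (simp add: mv_le_def mv_one_def)

end

locale mxi = mva +
  fixes m :: "'a set"
  assumes mx: "mv_max_ideal A m"
begin

lemma zr_m[simp]: "zr \<in> m" using mx unfolding mv_max_ideal_def mv_ideal_def by blast
lemma m_ideal: "mv_ideal A m" using mx unfolding mv_max_ideal_def by blast
lemma m_down: "b \<in> m \<Longrightarrow> lq a b \<Longrightarrow> a \<in> m"
proof -
  assume h: "b \<in> m" "lq a b"
  have "\<forall>a b. b \<in> m \<and> mv_le A a b \<longrightarrow> a \<in> m" using m_ideal unfolding mv_ideal_def by (elim conjE)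
  moreover have "mv_le A a b" using h(2) by (simp only: lq_iff_mv_le)
  ultimately show ?thesis using h(1) by blast
qed
lemma m_add: "a \<in> m \<Longrightarrow> b \<in> m \<Longrightarrow> a \<oplus> b \<in> m"
proof -
  assume "a \<in> m" "b \<in> m"
  moreover have "\<forall>a\<in>m. \<forall>b\<in>m. a \<oplus> b \<in> m" using m_ideal unfolding mv_ideal_def by (elim conjE)
  ultimately show ?thesis by blast
qed
lemma on_m[simp]: "on \<notin> m"
proof
  assume "on \<in> m"
  then have "m = UNIV" using m_down lq_on by blast
  then show False using mx unfolding mv_max_ideal_def by blast
qed

lemma simple: "x \<notin> m \<Longrightarrow> \<exists>z n. z \<in> m \<and> z \<oplus> nm n x = on"
proof -
  assume xm: "x \<notin> m"
  define J where "J = {a. \<exists>z\<in>m. \<exists>n. lq a (z \<oplus> nm n x)}"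
  have "mv_ideal A J"
    unfolding mv_ideal_def lq_iff_mv_le
  proof (intro conjI allI ballI impI)
    show "zr \<in> J" unfolding J_def by (rule CollectI, rule bexI[of _ zr]) auto
    fix a b assume "b \<in> J \<and> lq a b"
    then show "a \<in> J" unfolding J_def using lq_trans by blast
  next
    fix a b assume "a \<in> J" "b \<in> J"
    then obtain z1 n1 z2 n2 where "z1 \<in> m" and a1: "lq a (z1 \<oplus> nm n1 x)" and "z2 \<in> m"
        and b1: "lq b (z2 \<oplus> nm n2 x)"
      unfolding J_def by blast
    have "lq (a \<oplus> b) ((z1 \<oplus> nm n1 x) \<oplus> (z2 \<oplus> nm n2 x))"
      by (rule lq_mono2[OF a1 b1])
    also have "(z1 \<oplus> nm n1 x) \<oplus> (z2 \<oplus> nm n2 x) = (z1 \<oplus> z2) \<oplus> nm (n1 + n2) x"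
      by (simp add: nm_add ac)
    finally have "lq (a \<oplus> b) ((z1 \<oplus> z2) \<oplus> nm (n1 + n2) x)" .
    then show "a \<oplus> b \<in> J" unfolding J_def using \<open>z1 \<in> m\<close> \<open>z2 \<in> m\<close> m_add by blast
  qed
  moreover have "m \<subseteq> J" unfolding J_def by (auto intro!: bexI exI[of _ 0])
  moreover have "x \<in> J" unfolding J_def by (rule CollectI, rule bexI[of _ zr], rule exI[of _ 1]) auto
  ultimately have "J = UNIV" using mx xm unfolding mv_max_ideal_def by blast
  then have "on \<in> J" by simp
  then show ?thesis unfolding J_def using on_lq by blast
qed

lemma prime: "x \<odot> ng y \<in> m \<or> y \<odot> ng x \<in> m"
proof (rule ccontr)
  assume "\<not> ?thesis"
  then have a: "x \<odot> ng y \<notin> m" and b: "y \<odot> ng x \<notin> m" by auto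
  obtain z1 n1 where z1: "z1 \<in> m" "z1 \<oplus> nm n1 (x \<odot> ng y) = on" using simple[OF a] by blast
  obtain z2 n2 where z2: "z2 \<in> m" "z2 \<oplus> nm n2 (y \<odot> ng x) = on" using simple[OF b] by blast
  define n where "n = n1 + n2"
  define P where "P = nm n (x \<odot> ng y)"
  define Q where "Q = nm n (y \<odot> ng x)"
  define Z where "Z = z1 \<oplus> z2"
  have "lq (nm n1 (x \<odot> ng y)) P" unfolding P_def n_def by (rule nm_mono) simp
  then have "lq (z1 \<oplus> nm n1 (x \<odot> ng y)) (z1 \<oplus> P)" by (rule lq_mono_l)
  then have "lq on (z1 \<oplus> P)" using z1 by simp
  moreover have "lq (z1 \<oplus> P) (Z \<oplus> P)" unfolding Z_def by (rule lq_mono) simp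
  ultimately have "lq on (Z \<oplus> P)" by (rule lq_trans)
  moreover have "lq on (Z \<oplus> Q)"
  proof -
    have "lq (nm n2 (y \<odot> ng x)) Q" unfolding Q_def n_def by (rule nm_mono) simp
    then have "lq (z2 \<oplus> nm n2 (y \<odot> ng x)) (z2 \<oplus> Q)" by (rule lq_mono_l)
    then have "lq on (z2 \<oplus> Q)" using z2 by simp
    moreover have "lq (z2 \<oplus> Q) (Z \<oplus> Q)" unfolding Z_def by (rule lq_mono) (rule lq_add2)
    ultimately show ?thesis by (rule lq_trans)
  qed
  ultimately have "lq on (mt (Z \<oplus> P) (Z \<oplus> Q))" by (rule mt_glb)
  also have "mt (Z \<oplus> P) (Z \<oplus> Q) = Z \<oplus> mt P Q" by (rule D1[symmetric])
  also have "mt P Q = zr" unfolding P_def Q_def by (rule mt_nm2[OF P1])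
  finally have "Z = on" using on_lq by simp
  moreover have "Z \<in> m" unfolding Z_def using z1 z2 m_add by blast
  ultimately show False by simp
qed

end

context mxi begin

definition pr where "pr x y \<longleftrightarrow> x \<odot> ng y \<in> m"
definition eqv (infix "\<doteq>" 50) where "x \<doteq> y \<longleftrightarrow> pr x y \<and> pr y x"
definition isone where "isone x \<longleftrightarrow> ng x \<in> m"

lemma pr_refl[simp]: "pr x x" unfolding pr_def by simp
lemma lq_pr: "lq x y \<Longrightarrow> pr x y" unfolding pr_def by simp
lemma pr_trans: "pr x y \<Longrightarrow> pr y z \<Longrightarrow> pr x z"
proof -
  assume h: "pr x y" "pr y z"
  have a1: "lq x ((x \<odot> ng y) \<oplus> y)" using jn_ub1[of x y] by simp
  have a2: "lq y ((y \<odot> ng z) \<oplus> z)" using jn_ub1[of y z] by simp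
  have "lq ((x \<odot> ng y) \<oplus> y) ((x \<odot> ng y) \<oplus> ((y \<odot> ng z) \<oplus> z))" by (rule lq_mono_l[OF a2])
  with a1 have "lq x ((x \<odot> ng y) \<oplus> ((y \<odot> ng z) \<oplus> z))" by (rule lq_trans)
  then have "lq x (((x \<odot> ng y) \<oplus> (y \<odot> ng z)) \<oplus> z)" by (simp only: assoc)
  then have "lq (x \<odot> ng z) ((x \<odot> ng y) \<oplus> (y \<odot> ng z))" by (rule lq_resid[THEN iffD2])
  moreover have "(x \<odot> ng y) \<oplus> (y \<odot> ng z) \<in> m" using h unfolding pr_def by (rule m_add)
  ultimately show ?thesis unfolding pr_def using m_down by blast
qed
lemma pr_total: "pr x y \<or> pr y x" unfolding pr_def by (rule prime)
lemma pr_add: "pr x y \<Longrightarrow> pr (x \<oplus> z) (y \<oplus> z)"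
proof -
  assume h: "pr x y"
  have a1: "lq x ((x \<odot> ng y) \<oplus> y)" using jn_ub1[of x y] by simp
  then have "lq (x \<oplus> z) (((x \<odot> ng y) \<oplus> y) \<oplus> z)" by (rule lq_mono)
  then have "lq (x \<oplus> z) ((x \<odot> ng y) \<oplus> (y \<oplus> z))" by (simp only: assoc)
  then have "lq ((x \<oplus> z) \<odot> ng (y \<oplus> z)) (x \<odot> ng y)" by (rule lq_resid[THEN iffD2])
  then show ?thesis using h unfolding pr_def using m_down by blast
qed
lemma pr_add_l: "pr x y \<Longrightarrow> pr (z \<oplus> x) (z \<oplus> y)"
  using pr_add[of x y z] by (simp add: comm)
lemma pr_ng: "pr x y \<Longrightarrow> pr (ng y) (ng x)" unfolding pr_def by (simp add: comm)
lemma mem_pr: "z \<in> m \<longleftrightarrow> pr z zr" unfolding pr_def by simp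
lemma m_pr: "pr x y \<Longrightarrow> y \<in> m \<Longrightarrow> x \<in> m" by (meson mem_pr pr_trans)

lemma eqv_refl[simp]: "x \<doteq> x" unfolding eqv_def by simp
lemma eqv_sym: "x \<doteq> y \<Longrightarrow> y \<doteq> x" unfolding eqv_def by simp
lemma eqv_trans[trans]: "x \<doteq> y \<Longrightarrow> y \<doteq> z \<Longrightarrow> x \<doteq> z" unfolding eqv_def by (meson pr_trans)
lemma eq_eqv_trans[trans]: "x = y \<Longrightarrow> y \<doteq> z \<Longrightarrow> x \<doteq> z" by simp
lemma eqv_eq_trans[trans]: "x \<doteq> y \<Longrightarrow> y = z \<Longrightarrow> x \<doteq> z" by simp
lemma eqv_add: "x \<doteq> x' \<Longrightarrow> y \<doteq> y' \<Longrightarrow> x \<oplus> y \<doteq> x' \<oplus> y'"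
  unfolding eqv_def by (meson pr_add pr_add_l pr_trans)
lemma eqv_addr: "x \<doteq> x' \<Longrightarrow> x \<oplus> y \<doteq> x' \<oplus> y" by (simp add: eqv_add)
lemma eqv_addl: "y \<doteq> y' \<Longrightarrow> x \<oplus> y \<doteq> x \<oplus> y'" by (simp add: eqv_add)
lemma eqv_ng: "x \<doteq> y \<Longrightarrow> ng x \<doteq> ng y" unfolding eqv_def by (simp add: pr_ng)
lemma eqv_od: "x \<doteq> x' \<Longrightarrow> y \<doteq> y' \<Longrightarrow> x \<odot> y \<doteq> x' \<odot> y'"
  by (simp add: eqv_add eqv_ng)

lemma isone_pr: "isone x \<longleftrightarrow> pr on x" unfolding isone_def pr_def by simp
lemma isone_mono: "pr x y \<Longrightarrow> isone x \<Longrightarrow> isone y"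
  unfolding isone_pr by (meson pr_trans)
lemma isone_eqv: "x \<doteq> y \<Longrightarrow> isone x \<longleftrightarrow> isone y"
  unfolding eqv_def by (meson isone_mono)
lemma m_eqv: "x \<doteq> y \<Longrightarrow> x \<in> m \<longleftrightarrow> y \<in> m"
  unfolding eqv_def by (meson m_pr)
lemma chain: "\<not> isone (x \<oplus> y) \<Longrightarrow> x \<odot> y \<in> m"
proof -
  assume h: "\<not> isone (x \<oplus> y)"
  have "pr x (ng y) \<or> pr (ng y) x" by (rule pr_total)
  moreover have "pr (ng y) x \<longleftrightarrow> isone (x \<oplus> y)" unfolding pr_def isone_def by (simp add: comm)
  moreover have "pr x (ng y) \<longleftrightarrow> x \<odot> y \<in> m" unfolding pr_def by simp
  ultimately show ?thesis using h by blast
qed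
lemma carry_pr: "isone (x \<oplus> y) \<longleftrightarrow> pr (ng x) y" unfolding pr_def isone_def by simp
lemma carry_pr': "isone (x \<oplus> y) \<longleftrightarrow> pr (ng y) x" unfolding pr_def isone_def by (simp add: comm)
lemma nocarry_pr: "\<not> isone (x \<oplus> y) \<Longrightarrow> pr x (ng y)"
  using chain unfolding pr_def by simp

lemma jn_pr: "pr a b \<Longrightarrow> jn a b \<doteq> b"
proof -
  assume h: "pr a b"
  have "lq (jn a b \<odot> ng b) (a \<odot> ng b)" by (rule lq_resid[THEN iffD2]) simp
  then have "pr (jn a b) b" using h unfolding pr_def using m_down by blast
  moreover have "pr b (jn a b)" by (rule lq_pr) (rule jn_ub2)
  ultimately show ?thesis unfolding eqv_def by blast
qed
lemma jn_pr': "pr a b \<Longrightarrow> jn b a \<doteq> b"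
  using jn_pr ax6 by metis
lemma on_not_m: "\<not> isone zr" unfolding isone_def by simp

lemma cancel: "x \<oplus> c \<doteq> y \<oplus> c \<Longrightarrow> \<not> isone (x \<oplus> c) \<Longrightarrow> x \<doteq> y"
proof -
  assume e: "x \<oplus> c \<doteq> y \<oplus> c" and n: "\<not> isone (x \<oplus> c)"
  have n2: "\<not> isone (y \<oplus> c)" using n e isone_eqv by blast
  have px: "pr x (ng c)" by (rule nocarry_pr[OF n])
  have py: "pr y (ng c)" by (rule nocarry_pr[OF n2])
  have "(x \<oplus> c) \<odot> ng c \<doteq> x" using eqv_ng[OF jn_pr'[OF pr_ng[OF px]]] by (simp only: nn)
  then have "x \<doteq> (x \<oplus> c) \<odot> ng c" by (rule eqv_sym)
  also have "(x \<oplus> c) \<odot> ng c \<doteq> (y \<oplus> c) \<odot> ng c" by (rule eqv_od[OF e eqv_refl])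
  also have "(y \<oplus> c) \<odot> ng c \<doteq> y" using eqv_ng[OF jn_pr'[OF pr_ng[OF py]]] by (simp only: nn)
  finally show ?thesis .
qed

end

context mxi begin

lemma L1:
  assumes n: "\<not> isone (a \<oplus> b)" and c1: "isone (b \<oplus> c)"
  shows "(a \<oplus> b) \<odot> c \<doteq> a \<oplus> (b \<odot> c)"
proof -
  have pcb: "pr (ng c) b" using c1 by (simp only: carry_pr')
  have pcab: "pr (ng c) (a \<oplus> b)" by (rule pr_trans[OF pcb lq_pr[OF lq_add2]])
  have e1: "(a \<oplus> b) \<odot> c \<oplus> ng c \<doteq> a \<oplus> b" by (rule jn_pr'[OF pcab])
  have "b \<odot> c \<oplus> ng c \<doteq> b" by (rule jn_pr'[OF pcb])
  then have "a \<oplus> (b \<odot> c \<oplus> ng c) \<doteq> a \<oplus> b" by (rule eqv_addl)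
  then have e2: "a \<oplus> (b \<odot> c) \<oplus> ng c \<doteq> a \<oplus> b" by (simp only: assoc)
  have "(a \<oplus> b) \<odot> c \<oplus> ng c \<doteq> a \<oplus> (b \<odot> c) \<oplus> ng c" using e1 eqv_sym[OF e2] by (rule eqv_trans)
  moreover have "\<not> isone ((a \<oplus> b) \<odot> c \<oplus> ng c)" using isone_eqv[OF e1] n by simp
  ultimately show ?thesis by (rule cancel)
qed

lemma B1:
  assumes n1: "\<not> isone (x \<oplus> y)" and n2: "\<not> isone (y \<oplus> z)" and c: "isone (x \<oplus> y \<oplus> z)"
  shows "(x \<oplus> y) \<odot> z \<doteq> x \<odot> (y \<oplus> z)"
proof -
  have p1: "pr (ng z) (x \<oplus> y)" using c by (simp only: carry_pr')
  have eL: "(x \<oplus> y) \<odot> z \<oplus> ng z \<doteq> x \<oplus> y" by (rule jn_pr'[OF p1])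
  have "isone (x \<oplus> (y \<oplus> z))" using c by (simp only: assoc)
  then have p2: "pr (ng (y \<oplus> z)) x" by (simp only: carry_pr')
  have eR1: "x \<odot> (y \<oplus> z) \<oplus> ng (y \<oplus> z) \<doteq> x" by (rule jn_pr'[OF p2])
  have p3: "pr y (ng z)" by (rule nocarry_pr[OF n2])
  have "jn (ng z) y \<doteq> ng z" by (rule jn_pr'[OF p3])
  moreover have "jn (ng z) y = ng (y \<oplus> z) \<oplus> y" by (simp only: nn comm[of z y])
  ultimately have eR2: "ng (y \<oplus> z) \<oplus> y \<doteq> ng z" by simp
  have "x \<odot> (y \<oplus> z) \<oplus> ng z \<doteq> x \<odot> (y \<oplus> z) \<oplus> (ng (y \<oplus> z) \<oplus> y)" by (rule eqv_addl[OF eqv_sym[OF eR2]])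
  also have "\<dots> = (x \<odot> (y \<oplus> z) \<oplus> ng (y \<oplus> z)) \<oplus> y" by (simp only: assoc)
  also have "\<dots> \<doteq> x \<oplus> y" by (rule eqv_addr[OF eR1])
  also have "\<dots> \<doteq> (x \<oplus> y) \<odot> z \<oplus> ng z" by (rule eqv_sym[OF eL])
  finally have "(x \<oplus> y) \<odot> z \<oplus> ng z \<doteq> x \<odot> (y \<oplus> z) \<oplus> ng z" by (rule eqv_sym)
  moreover have "\<not> isone ((x \<oplus> y) \<odot> z \<oplus> ng z)" using isone_eqv[OF eL] n1 by simp
  ultimately show ?thesis by (rule cancel)
qed

lemma L2:
  assumes c1: "isone (x \<oplus> y)" and ny: "\<not> isone y" and p: "pr x z"
  shows "x \<oplus> (y \<odot> z) \<doteq> (x \<odot> y) \<oplus> z"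
proof -
  define t where "t = x \<odot> y"
  have pxy: "pr (ng x) y" using c1 by (simp only: carry_pr)
  have "t \<oplus> ng x = jn y (ng x)" unfolding t_def by (simp only: comm[of "ng x" "ng y"])
  also have "\<dots> \<doteq> y" by (rule jn_pr'[OF pxy])
  finally have ey: "t \<oplus> ng x \<doteq> y" .
  have nt: "\<not> isone (t \<oplus> ng x)" using isone_eqv[OF ey] ny by simp
  have pxz: "isone (ng x \<oplus> z)" using p by (simp add: carry_pr)
  have "x \<oplus> (y \<odot> z) \<doteq> x \<oplus> ((t \<oplus> ng x) \<odot> z)"
    by (rule eqv_addl, rule eqv_od[OF eqv_sym[OF ey] eqv_refl])
  also have "\<dots> \<doteq> x \<oplus> (t \<oplus> (ng x \<odot> z))" by (rule eqv_addl[OF L1[OF nt pxz]])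
  also have "\<dots> = t \<oplus> (x \<oplus> (ng x \<odot> z))" by (rule lcomm)
  also have "x \<oplus> (ng x \<odot> z) = jn z x" by (simp add: comm)
  also have "t \<oplus> jn z x \<doteq> t \<oplus> z" by (rule eqv_addl[OF jn_pr'[OF p]])
  finally show ?thesis unfolding t_def .
qed

lemma L2s:
  assumes c1: "isone (x \<oplus> y)" and c2: "isone (y \<oplus> z)" and ny: "\<not> isone y"
  shows "(x \<odot> y) \<oplus> z \<doteq> x \<oplus> (y \<odot> z)"
proof (cases "pr x z")
  case True
  show ?thesis by (rule eqv_sym[OF L2[OF c1 ny True]])
next
  case False
  then have "pr z x" using pr_total by blast
  moreover have "isone (z \<oplus> y)" using c2 by (simp only: comm)
  ultimately have "z \<oplus> (y \<odot> x) \<doteq> (z \<odot> y) \<oplus> x" using L2 ny by blast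
  moreover have "z \<oplus> (y \<odot> x) = (x \<odot> y) \<oplus> z" by (simp only: comm)
  moreover have "(z \<odot> y) \<oplus> x = x \<oplus> (y \<odot> z)" by (simp only: comm)
  ultimately show ?thesis by simp
qed

definition cr :: "'a \<Rightarrow> 'a \<Rightarrow> nat" where "cr x y = (if isone (x \<oplus> y) then 1 else 0)"
definition fr :: "'a \<Rightarrow> 'a \<Rightarrow> 'a" where "fr x y = (if isone (x \<oplus> y) then x \<odot> y else x \<oplus> y)"

lemma isone_up: "isone x \<Longrightarrow> lq x y \<Longrightarrow> isone y" using isone_mono lq_pr by blast

lemma fr_F: "\<not> isone x \<Longrightarrow> \<not> isone (fr x y)"
  unfolding fr_def using isone_up[OF _ od_lq1] by auto

lemma asc:
  assumes nx: "\<not> isone x" and ny: "\<not> isone y" and nz: "\<not> isone z"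
  shows "cr x y + cr (fr x y) z = cr y z + cr x (fr y z) \<and> fr (fr x y) z \<doteq> fr x (fr y z)"
proof (cases "isone (x \<oplus> y)")
  case c1: False
  show ?thesis
  proof (cases "isone (y \<oplus> z)")
    case d1: False
    show ?thesis
    proof (cases "isone (x \<oplus> y \<oplus> z)")
      case True
      then have "isone (x \<oplus> (y \<oplus> z))" by (simp only: assoc)
      then show ?thesis using c1 d1 True B1[OF c1 d1 True] unfolding cr_def fr_def by simp
    next
      case False
      then have "\<not> isone (x \<oplus> (y \<oplus> z))" by (simp add: assoc)
      then show ?thesis using c1 d1 False unfolding cr_def fr_def by (simp add: assoc)
    qed
  next
    case d1: True
    have c2: "isone (x \<oplus> y \<oplus> z)" using isone_up[OF d1] by (simp add: assoc)
    have e: "(x \<oplus> y) \<odot> z \<doteq> x \<oplus> (y \<odot> z)" by (rule L1[OF c1 d1])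
    have "\<not> isone (x \<oplus> (y \<odot> z))"
    proof
      assume "isone (x \<oplus> (y \<odot> z))"
      moreover have "lq (x \<oplus> (y \<odot> z)) (x \<oplus> y)" by (rule lq_mono_l[OF od_lq1])
      ultimately show False using c1 isone_up by blast
    qed
    then show ?thesis using c1 d1 c2 e unfolding cr_def fr_def by simp
  qed
next
  case c1: True
  show ?thesis
  proof (cases "isone (y \<oplus> z)")
    case d1: False
    have d2: "isone (x \<oplus> (y \<oplus> z))" using isone_up[OF c1 lq_add[of "x \<oplus> y" z]] by (simp only: assoc)
    have n': "\<not> isone (z \<oplus> y)" using d1 by (simp add: comm)
    have c': "isone (y \<oplus> x)" using c1 by (simp only: comm)
    have e: "(z \<oplus> y) \<odot> x \<doteq> z \<oplus> (y \<odot> x)" by (rule L1[OF n' c'])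
    have e2: "x \<odot> (y \<oplus> z) \<doteq> (x \<odot> y) \<oplus> z"
    proof -
      have "x \<odot> (y \<oplus> z) = (z \<oplus> y) \<odot> x" by (simp only: comm)
      also note e
      also have "z \<oplus> (y \<odot> x) = (x \<odot> y) \<oplus> z" by (simp only: comm)
      finally show ?thesis .
    qed
    have "\<not> isone ((x \<odot> y) \<oplus> z)"
    proof
      assume "isone ((x \<odot> y) \<oplus> z)"
      moreover have "lq ((x \<odot> y) \<oplus> z) (y \<oplus> z)" by (rule lq_mono[OF od_lq])
      ultimately show False using d1 isone_up by blast
    qed
    then show ?thesis using c1 d1 d2 eqv_sym[OF e2] unfolding cr_def fr_def by simp
  next
    case d1: True
    have e: "(x \<odot> y) \<oplus> z \<doteq> x \<oplus> (y \<odot> z)" by (rule L2s[OF c1 d1 ny])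
    have eq: "isone ((x \<odot> y) \<oplus> z) \<longleftrightarrow> isone (x \<oplus> (y \<odot> z))" by (rule isone_eqv[OF e])
    have "(x \<odot> y) \<odot> z = x \<odot> (y \<odot> z)" by (simp add: assoc)
    then show ?thesis using c1 d1 e eq unfolding cr_def fr_def by auto
  qed
qed

end

context mxi begin

definition padd :: "nat \<times> 'a \<Rightarrow> nat \<times> 'a \<Rightarrow> nat \<times> 'a" where
  "padd P Q = (fst P + fst Q + cr (snd P) (snd Q), fr (snd P) (snd Q))"
definition peq :: "nat \<times> 'a \<Rightarrow> nat \<times> 'a \<Rightarrow> bool" where
  "peq P Q \<longleftrightarrow> fst P = fst Q \<and> snd P \<doteq> snd Q"
definition good :: "nat \<times> 'a \<Rightarrow> bool" where "good P \<longleftrightarrow> \<not> isone (snd P)"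

lemma peq_refl[simp]: "peq P P" unfolding peq_def by simp
lemma peq_sym: "peq P Q \<Longrightarrow> peq Q P" unfolding peq_def by (simp add: eqv_sym)
lemma peq_trans: "peq P Q \<Longrightarrow> peq Q R \<Longrightarrow> peq P R" unfolding peq_def using eqv_trans by auto
lemma peq_good: "peq P Q \<Longrightarrow> good P \<Longrightarrow> good Q" unfolding peq_def good_def using isone_eqv by blast

lemma cr_cong: "x \<doteq> x' \<Longrightarrow> cr x y = cr x' y"
  unfolding cr_def using isone_eqv[OF eqv_addr] by metis
lemma fr_cong: "x \<doteq> x' \<Longrightarrow> fr x y \<doteq> fr x' y"
  unfolding fr_def using isone_eqv[OF eqv_addr, of x x' y] eqv_od[OF _ eqv_refl] eqv_addr by auto
lemma cr_comm: "cr x y = cr y x" unfolding cr_def by (simp add: comm)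
lemma fr_comm: "fr x y = fr y x" unfolding fr_def by (simp add: comm)
lemma cr_le: "cr x y \<le> 1" unfolding cr_def by simp

lemma padd_comm: "padd P Q = padd Q P" unfolding padd_def by (simp add: cr_comm fr_comm)
lemma padd_cong: "peq P P' \<Longrightarrow> peq (padd P Q) (padd P' Q)"
  unfolding peq_def padd_def using cr_cong fr_cong by auto
lemma padd_cong2: "peq Q Q' \<Longrightarrow> peq (padd P Q) (padd P Q')"
  using padd_cong padd_comm by metis
lemma padd_good: "good P \<Longrightarrow> good (padd P Q)" unfolding good_def padd_def using fr_F by simp
lemma padd_good2: "good Q \<Longrightarrow> good (padd P Q)" using padd_good padd_comm by metis
lemma padd_assoc: "good P \<Longrightarrow> good Q \<Longrightarrow> good R \<Longrightarrow> peq (padd (padd P Q) R) (padd P (padd Q R))"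
  unfolding good_def peq_def padd_def using asc[of "snd P" "snd Q" "snd R"] by simp
lemma good_zero[simp]: "good (a, zr)" unfolding good_def using on_not_m by simp
lemma padd_zero: "good P \<Longrightarrow> padd P (0, zr) = P"
  unfolding good_def padd_def cr_def fr_def by (cases P) simp

lemma swap4:
  assumes "good W1" "good W2" "good W3" "good W4"
  shows "peq (padd (padd W1 W2) (padd W3 W4)) (padd (padd W1 W3) (padd W2 W4))"
proof -
  have g: "good (padd W2 W3)" "good (padd W3 W2)" "good (padd W1 W2)" "good (padd W3 W4)" "good (padd W2 W4)"
    using assms padd_good by auto
  have "peq (padd (padd W1 W2) (padd W3 W4)) (padd W1 (padd W2 (padd W3 W4)))"
    using padd_assoc assms g by blast
  moreover have "peq (padd W2 (padd W3 W4)) (padd (padd W2 W3) W4)"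
    using padd_assoc assms by (blast intro: peq_sym)
  then have "peq (padd W1 (padd W2 (padd W3 W4))) (padd W1 (padd (padd W2 W3) W4))" by (rule padd_cong2)
  moreover have "padd W2 W3 = padd W3 W2" by (rule padd_comm)
  moreover have "peq (padd (padd W3 W2) W4) (padd W3 (padd W2 W4))" using padd_assoc assms by blast
  then have "peq (padd W1 (padd (padd W3 W2) W4)) (padd W1 (padd W3 (padd W2 W4)))" by (rule padd_cong2)
  moreover have "peq (padd W1 (padd W3 (padd W2 W4))) (padd (padd W1 W3) (padd W2 W4))"
    using padd_assoc assms g by (blast intro: peq_sym)
  ultimately show ?thesis by (metis peq_trans)
qed

fun mult :: "nat \<Rightarrow> nat \<times> 'a \<Rightarrow> nat \<times> 'a" where
  "mult 0 P = (0, zr)" | "mult (Suc n) P = padd (mult n P) P"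

lemma mult_good: "good P \<Longrightarrow> good (mult n P)"
  by (induction n) (auto intro: padd_good2)
lemma mult_cong: "peq P P' \<Longrightarrow> peq (mult n P) (mult n P')"
proof (induction n)
  case 0 then show ?case by simp
next
  case (Suc n)
  have "peq (padd (mult n P) P) (padd (mult n P') P)" by (rule padd_cong[OF Suc.IH[OF Suc.prems]])
  moreover have "peq (padd (mult n P') P) (padd (mult n P') P')" by (rule padd_cong2[OF Suc.prems])
  ultimately show ?case by (simp add: peq_trans)
qed
lemma mult_add: "good P \<Longrightarrow> peq (mult (n + k) P) (padd (mult n P) (mult k P))"
proof (induction k)
  case 0 then show ?case using padd_zero mult_good by simp
next
  case (Suc k)
  have "peq (padd (mult (n + k) P) P) (padd (padd (mult n P) (mult k P)) P)"
    by (rule padd_cong[OF Suc.IH[OF Suc.prems]])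
  moreover have "peq (padd (padd (mult n P) (mult k P)) P) (padd (mult n P) (padd (mult k P) P))"
    using padd_assoc mult_good Suc.prems by blast
  ultimately show ?case by (simp add: peq_trans)
qed
lemma mult_padd: "good P \<Longrightarrow> good Q \<Longrightarrow> peq (mult n (padd P Q)) (padd (mult n P) (mult n Q))"
proof (induction n)
  case 0 then show ?case by (simp add: padd_zero)
next
  case (Suc n)
  have "peq (padd (mult n (padd P Q)) (padd P Q)) (padd (padd (mult n P) (mult n Q)) (padd P Q))"
    by (rule padd_cong[OF Suc.IH[OF Suc.prems]])
  moreover have "peq (padd (padd (mult n P) (mult n Q)) (padd P Q)) (padd (padd (mult n P) P) (padd (mult n Q) Q))"
    using swap4 mult_good Suc.prems by blast
  ultimately show ?case by (simp add: peq_trans)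
qed
lemma mult_fst: "mult n (a, x) = (n * a + fst (mult n (0, x)), snd (mult n (0, x)))"
  by (induction n) (simp_all add: padd_def)

definition Q :: "nat \<Rightarrow> 'a \<Rightarrow> nat" where "Q n x = fst (mult n (0, x))"

lemma Q_step: "Q n x \<le> Q (Suc n) x \<and> Q (Suc n) x \<le> Q n x + 1"
  unfolding Q_def using cr_le by (simp add: padd_def)
lemma Q_mono: "n \<le> k \<Longrightarrow> Q n x \<le> Q k x"
  by (induction k) (auto simp: le_Suc_eq intro: le_trans[OF _ conjunct1[OF Q_step]])
lemma Q_le: "Q n x \<le> n"
proof (induction n)
  case 0 then show ?case by (simp add: Q_def)
next
  case (Suc n) then show ?case using Q_step[of n x] by simp
qed
lemma Q_double: "\<not> isone x \<Longrightarrow> 2 * Q n x \<le> Q (2 * n) x \<and> Q (2 * n) x \<le> 2 * Q n x + 1"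
proof -
  assume "\<not> isone x"
  then have g: "good (0, x)" unfolding good_def by simp
  have "peq (mult (n + n) (0, x)) (padd (mult n (0, x)) (mult n (0, x)))" by (rule mult_add[OF g])
  then have "Q (n + n) x = Q n x + Q n x + cr (snd (mult n (0, x))) (snd (mult n (0, x)))"
    unfolding peq_def padd_def Q_def by simp
  then show ?thesis using cr_le by (simp add: mult_2)
qed
lemma Q_add:
  assumes "\<not> isone x" "\<not> isone y" "\<not> isone (x \<oplus> y)"
  shows "Q n x + Q n y \<le> Q n (x \<oplus> y) \<and> Q n (x \<oplus> y) \<le> Q n x + Q n y + 1"
proof -
  have e: "padd (0, x) (0, y) = (0, x \<oplus> y)" using assms(3) unfolding padd_def cr_def fr_def by simp
  have "peq (mult n (padd (0, x) (0, y))) (padd (mult n (0, x)) (mult n (0, y)))"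
    by (rule mult_padd) (use assms in \<open>simp_all add: good_def\<close>)
  then have "peq (mult n (0, x \<oplus> y)) (padd (mult n (0, x)) (mult n (0, y)))" unfolding e .
  then have "Q n (x \<oplus> y) = Q n x + Q n y + cr (snd (mult n (0, x))) (snd (mult n (0, y)))"
    unfolding peq_def padd_def Q_def by simp
  then show ?thesis using cr_le by simp
qed
lemma Q_carry:
  assumes "\<not> isone x" "\<not> isone y" "isone (x \<oplus> y)"
  shows "n \<le> Q n x + Q n y + 1"
proof -
  have e: "padd (0, x) (0, y) = (1, x \<odot> y)" using assms(3) unfolding padd_def cr_def fr_def by simp
  have "peq (mult n (padd (0, x) (0, y))) (padd (mult n (0, x)) (mult n (0, y)))"
    by (rule mult_padd) (use assms in \<open>simp_all add: good_def\<close>)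
  then have "peq (mult n (1, x \<odot> y)) (padd (mult n (0, x)) (mult n (0, y)))" unfolding e .
  then have "n + Q n (x \<odot> y) = Q n x + Q n y + cr (snd (mult n (0, x))) (snd (mult n (0, y)))"
    unfolding peq_def padd_def Q_def using mult_fst[of n 1 "x \<odot> y"] by simp
  then show ?thesis using cr_le[of "snd (mult n (0, x))" "snd (mult n (0, y))"] by linarith
qed
lemma m_not_one: "u \<in> m \<Longrightarrow> \<not> isone u"
  unfolding isone_def using m_add[of u "ng u"] by auto
lemma mult_m: "x \<in> m \<Longrightarrow> fst (mult n (0, x)) = 0 \<and> snd (mult n (0, x)) \<in> m"
proof (induction n)
  case 0 then show ?case by simp
next
  case (Suc n)
  then have "snd (mult n (0, x)) \<oplus> x \<in> m" using m_add by blast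
  then show ?case using Suc m_not_one by (simp add: padd_def cr_def fr_def)
qed
lemma Q_m: "x \<in> m \<Longrightarrow> Q n x = 0" unfolding Q_def using mult_m by blast
lemma Q_nm: "Q n x = 0 \<Longrightarrow> mult n (0, x) = (0, nm n x)"
proof (induction n)
  case 0 then show ?case by simp
next
  case (Suc n)
  have "Q n x = 0" using Suc.prems Q_step[of n x] by simp
  then have e: "mult n (0, x) = (0, nm n x)" by (rule Suc.IH)
  then have "cr (nm n x) x = 0" using Suc.prems unfolding Q_def by (simp add: padd_def)
  then show ?case using e by (simp add: padd_def cr_def fr_def split: if_splits)
qed
lemma Q_pos: "x \<notin> m \<Longrightarrow> \<not> isone x \<Longrightarrow> \<exists>n. 1 \<le> Q n x"
proof (rule ccontr)
  assume a: "x \<notin> m" "\<not> isone x" "\<not> (\<exists>n. 1 \<le> Q n x)"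
  obtain z n where z: "z \<in> m" "z \<oplus> nm n x = on" using simple[OF a(1)] by blast
  have "lq (ng (nm n x)) z" using z(2) by (simp add: comm)
  then have "isone (nm n x)" unfolding isone_def using z(1) m_down by blast
  moreover have "Q n x = 0" using a(3) by (metis One_nat_def not_less_eq_eq le0 le_antisym)
  then have "good (0, nm n x)" using mult_good[of "(0, x)" n] a(2) Q_nm by (simp add: good_def)
  ultimately show False by (simp add: good_def)
qed
lemma Q_neg:
  assumes "\<not> isone x" "\<not> isone (ng x)"
  shows "n \<le> Q n x + Q n (ng x) + 1 \<and> Q n x + Q n (ng x) \<le> n"
proof -
  have e: "padd (0, x) (0, ng x) = (1, zr)" unfolding padd_def cr_def fr_def isone_def by simp
  have "peq (mult n (padd (0, x) (0, ng x))) (padd (mult n (0, x)) (mult n (0, ng x)))"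
    by (rule mult_padd) (use assms in \<open>simp_all add: good_def\<close>)
  then have "peq (mult n (1, zr)) (padd (mult n (0, x)) (mult n (0, ng x)))" unfolding e .
  then have "n + Q n zr = Q n x + Q n (ng x) + cr (snd (mult n (0, x))) (snd (mult n (0, ng x)))"
    unfolding peq_def padd_def Q_def using mult_fst[of n 1 zr] by simp
  moreover have "Q n zr = 0" by (rule Q_m) simp
  ultimately show ?thesis using cr_le[of "snd (mult n (0, x))" "snd (mult n (0, ng x))"] by linarith
qed

end

lemma close_lemma:
  fixes p q c :: real
  assumes "\<forall>k::nat. \<bar>p - q\<bar> \<le> c / 2 ^ k"
  shows "p = q"
proof (rule ccontr)
  assume "p \<noteq> q"
  then have d: "\<bar>p - q\<bar> > 0" by simp
  have c0: "c \<ge> 0" using assms[rule_format, of 0] by simp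
  obtain k where k: "(1/2::real) ^ k < \<bar>p - q\<bar> / (c + 1)"
    using real_arch_pow_inv[of "\<bar>p - q\<bar> / (c + 1)" "1/2"] d c0 by auto
  have "c / 2 ^ k \<le> (c + 1) * (1/2) ^ k" using c0 by (simp add: power_one_over field_simps)
  also have "\<dots> < \<bar>p - q\<bar>" using k c0 by (simp add: field_simps)
  finally show False using assms[rule_format, of k] by simp
qed

lemma small_lemma:
  fixes t :: real
  assumes "\<forall>k::nat. t \<le> 1 / 2 ^ k"
  shows "t \<le> 0"
proof (rule ccontr)
  assume "\<not> t \<le> 0"
  then have d: "t > 0" by simp
  obtain k where k: "(1/2::real) ^ k < t"
    using real_arch_pow_inv[of t "1/2"] d by auto
  then show False using assms[rule_format, of k] by (simp add: power_one_over)
qed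

context mxi begin

definition ak :: "nat \<Rightarrow> 'a \<Rightarrow> real" where "ak k x = real (Q (2 ^ k) x) / 2 ^ k"
definition hv :: "'a \<Rightarrow> real" where "hv x = (if isone x then 1 else (SUP k. ak k x))"

lemma ak_nonneg: "0 \<le> ak k x" unfolding ak_def by simp
lemma ak_le1: "ak k x \<le> 1" unfolding ak_def using Q_le[of "2 ^ k" x] by (simp add: field_simps)
lemma ak_Suc: "\<not> isone x \<Longrightarrow> ak k x \<le> ak (Suc k) x \<and> ak (Suc k) x \<le> ak k x + 1 / 2 ^ Suc k"
proof -
  assume "\<not> isone x"
  from Q_double[OF this, of "2 ^ k"]
  have a: "real (2 * Q (2 ^ k) x) \<le> real (Q (2 ^ Suc k) x)"
    and b: "real (Q (2 ^ Suc k) x) \<le> real (2 * Q (2 ^ k) x + 1)" by simp_all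
  show ?thesis unfolding ak_def using a b by (simp add: field_simps)
qed
lemma ak_incseq: "\<not> isone x \<Longrightarrow> incseq (\<lambda>k. ak k x)"
  using ak_Suc by (simp add: incseq_SucI)
lemma bk_decseq: "\<not> isone x \<Longrightarrow> decseq (\<lambda>k. ak k x + 1 / 2 ^ k)"
proof (rule decseq_SucI)
  fix k assume "\<not> isone x"
  then have "ak (Suc k) x \<le> ak k x + 1 / 2 ^ Suc k" using ak_Suc by blast
  then show "ak (Suc k) x + 1 / 2 ^ Suc k \<le> ak k x + 1 / 2 ^ k" by simp
qed
lemma ak_le_bk: "\<not> isone x \<Longrightarrow> ak j x \<le> ak k x + 1 / 2 ^ k"
proof (cases "j \<le> k")
  case True
  assume "\<not> isone x"
  then have "ak j x \<le> ak k x" using ak_incseq True by (simp add: incseq_def)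
  moreover have "(0::real) \<le> 1 / 2 ^ k" by simp
  ultimately show ?thesis by linarith
next
  case False
  assume n: "\<not> isone x"
  then have "ak j x + 1 / 2 ^ j \<le> ak k x + 1 / 2 ^ k" using bk_decseq[OF n] False by (simp add: decseq_def)
  moreover have "(0::real) \<le> 1 / 2 ^ j" by simp
  ultimately show ?thesis by linarith
qed
lemma hv_bounds: "\<not> isone x \<Longrightarrow> ak k x \<le> hv x \<and> hv x \<le> ak k x + 1 / 2 ^ k"
proof -
  assume n: "\<not> isone x"
  have bdd: "bdd_above (range (\<lambda>k. ak k x))" by (rule bdd_aboveI[where M=1]) (auto simp: ak_le1)
  have "ak k x \<le> (SUP k. ak k x)" by (rule cSUP_upper[OF _ bdd]) simp
  moreover have "(SUP k. ak k x) \<le> ak k x + 1 / 2 ^ k" by (rule cSUP_least) (auto intro: ak_le_bk[OF n])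
  ultimately show ?thesis using n unfolding hv_def by simp
qed
lemma hv_range: "0 \<le> hv x \<and> hv x \<le> 1"
proof (cases "isone x")
  case True then show ?thesis unfolding hv_def by simp
next
  case False
  have "0 \<le> hv x" using hv_bounds[OF False, of 0] ak_nonneg[of 0 x] by linarith
  moreover have "hv x \<le> 1"
    unfolding hv_def using False by (simp add: cSUP_least ak_le1)
  ultimately show ?thesis by simp
qed
lemma hv_m: "x \<in> m \<Longrightarrow> hv x = 0"
  unfolding hv_def ak_def using m_not_one Q_m by simp
lemma hv_pos: "x \<notin> m \<Longrightarrow> 0 < hv x"
proof (cases "isone x")
  case True then show ?thesis unfolding hv_def by simp
next
  case False
  assume xm: "x \<notin> m"
  obtain n where n: "1 \<le> Q n x" using Q_pos[OF xm False] by blast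
  have "n \<le> 2 ^ n" by (simp add: less_imp_le)
  then have "1 \<le> Q (2 ^ n) x" using Q_mono n by (meson le_trans)
  then have "0 < ak n x" unfolding ak_def by simp
  then show ?thesis using hv_bounds[OF False, of n] by linarith
qed
lemma hv_add_nc:
  assumes nx: "\<not> isone x" and ny: "\<not> isone y" and nxy: "\<not> isone (x \<oplus> y)"
  shows "hv (x \<oplus> y) = hv x + hv y"
proof -
  have "\<forall>k::nat. \<bar>hv (x \<oplus> y) - (hv x + hv y)\<bar> \<le> 3 / 2 ^ k"
  proof
    fix k :: nat
    have q: "real (Q (2^k) x) + real (Q (2^k) y) \<le> real (Q (2^k) (x \<oplus> y))"
      "real (Q (2^k) (x \<oplus> y)) \<le> real (Q (2^k) x) + real (Q (2^k) y) + 1"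
      using Q_add[OF nx ny nxy, of "2^k"] by linarith+
    have a: "ak k x + ak k y \<le> ak k (x \<oplus> y)" "ak k (x \<oplus> y) \<le> ak k x + ak k y + 1 / 2 ^ k"
      using divide_right_mono[OF q(1), of "2^k"] divide_right_mono[OF q(2), of "2^k"]
      unfolding ak_def by (simp_all add: add_divide_distrib)
    show "\<bar>hv (x \<oplus> y) - (hv x + hv y)\<bar> \<le> 3 / 2 ^ k"
      using a hv_bounds[OF nx, of k] hv_bounds[OF ny, of k] hv_bounds[OF nxy, of k] by (simp add: abs_le_iff)
  qed
  then show ?thesis by (rule close_lemma)
qed
lemma hv_add_c:
  assumes nx: "\<not> isone x" and ny: "\<not> isone y" and cxy: "isone (x \<oplus> y)"
  shows "1 \<le> hv x + hv y"
proof -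
  have "\<forall>k::nat. 1 - (hv x + hv y) \<le> 1 / 2 ^ k"
  proof
    fix k :: nat
    have q: "real (2^k) \<le> real (Q (2^k) x) + real (Q (2^k) y) + 1"
      using Q_carry[OF nx ny cxy, of "2^k"] by linarith
    then have "real (2^k) / 2^k \<le> (real (Q (2^k) x) + real (Q (2^k) y) + 1) / 2^k"
      by (rule divide_right_mono) simp
    then have "1 - 1 / 2 ^ k \<le> ak k x + ak k y"
      unfolding ak_def by (simp add: add_divide_distrib)
    then show "1 - (hv x + hv y) \<le> 1 / 2 ^ k"
      using hv_bounds[OF nx, of k] hv_bounds[OF ny, of k] by linarith
  qed
  then show ?thesis using small_lemma by fastforce
qed
lemma hv_neg_g:
  assumes nx: "\<not> isone x" and nnx: "\<not> isone (ng x)"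
  shows "hv x + hv (ng x) = 1"
proof -
  have "\<forall>k::nat. \<bar>hv x + hv (ng x) - 1\<bar> \<le> 2 / 2 ^ k"
  proof
    fix k :: nat
    have q: "real (2^k) \<le> real (Q (2^k) x) + real (Q (2^k) (ng x)) + 1"
      "real (Q (2^k) x) + real (Q (2^k) (ng x)) \<le> real (2^k)"
      using Q_neg[OF nx nnx, of "2^k"] by linarith+
    have a: "1 - 1 / 2 ^ k \<le> ak k x + ak k (ng x)" "ak k x + ak k (ng x) \<le> 1"
      using divide_right_mono[OF q(1), of "2^k"] divide_right_mono[OF q(2), of "2^k"]
      unfolding ak_def by (simp_all add: add_divide_distrib)
    show "\<bar>hv x + hv (ng x) - 1\<bar> \<le> 2 / 2 ^ k"
      using a hv_bounds[OF nx, of k] hv_bounds[OF nnx, of k] by (simp add: abs_le_iff)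
  qed
  then show ?thesis using close_lemma by fastforce
qed

lemma hv_hom: "mv_hom_unit A hv"
  unfolding mv_hom_unit_def
proof (intro conjI allI)
  fix x show "0 \<le> hv x" "hv x \<le> 1" using hv_range by auto
next
  show "hv zr = 0" by (rule hv_m) simp
next
  fix x y
  show "hv (x \<oplus> y) = min 1 (hv x + hv y)"
  proof (cases "isone x \<or> isone y")
    case True
    then have "isone (x \<oplus> y)" using isone_up lq_add lq_add2 by blast
    then have "hv (x \<oplus> y) = 1" unfolding hv_def by simp
    moreover have "1 \<le> hv x + hv y" using True hv_range[of x] hv_range[of y] unfolding hv_def by auto
    ultimately show ?thesis by simp
  next
    case False
    then have nx: "\<not> isone x" and ny: "\<not> isone y" by auto
    show ?thesis
    proof (cases "isone (x \<oplus> y)")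
      case True
      then show ?thesis using hv_add_c[OF nx ny True] unfolding hv_def by simp
    next
      case nxy: False
      then show ?thesis using hv_add_nc[OF nx ny nxy] hv_range[of "x \<oplus> y"] by simp
    qed
  qed
next
  fix x
  show "hv (ng x) = 1 - hv x"
  proof (cases "isone x")
    case True
    then have "ng x \<in> m" unfolding isone_def .
    then show ?thesis using True hv_m unfolding hv_def by simp
  next
    case nx: False
    show ?thesis
    proof (cases "isone (ng x)")
      case True
      then have "x \<in> m" unfolding isone_def by simp
      then show ?thesis using True hv_m unfolding hv_def by simp
    next
      case False
      then show ?thesis using hv_neg_g[OF nx False] by simp
    qed
  qed
qed

lemma hv_ker: "{x. hv x = 0} = m"
  using hv_m hv_pos by force

lemma exists_hom: "\<exists>h. mv_hom_unit A h \<and> {x. h x = 0} = m"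
  using hv_hom hv_ker by blast

end

fun phi :: "bool list \<Rightarrow> real \<Rightarrow> real" where
  "phi [] t = t"
| "phi (b # w) t = phi w (if b then max 0 (2 * t - 1) else min 1 (2 * t))"

lemma phi_mono: "s \<le> t \<Longrightarrow> phi w s \<le> phi w t"
proof (induction w arbitrary: s t)
  case Nil then show ?case by simp
next
  case (Cons b w)
  show ?case unfolding phi.simps
    by (rule Cons.IH) (use Cons.prems in \<open>auto simp: max_def min_def\<close>)
qed

lemma sep_n: "\<forall>a b. 0 \<le> a \<and> a < b \<and> b \<le> 1 \<and> 1 < (b - a) * 2 ^ n \<longrightarrow> (\<exists>w. phi w a = 0 \<and> 0 < phi w b)"
proof (induction n)
  case 0 then show ?case by auto
next
  case (Suc n)
  show ?case
  proof (intro allI impI)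
    fix a b :: real
    assume h: "0 \<le> a \<and> a < b \<and> b \<le> 1 \<and> 1 < (b - a) * 2 ^ Suc n"
    show "\<exists>w. phi w a = 0 \<and> 0 < phi w b"
    proof (cases "b \<le> 1/2")
      case True
      have "1 < (2 * b - 2 * a) * 2 ^ n" using h by (simp add: algebra_simps)
      then have "\<exists>w. phi w (2 * a) = 0 \<and> 0 < phi w (2 * b)"
        by (intro Suc.IH[rule_format]) (use h True in auto)
      then obtain w where w: "phi w (2 * a) = 0" "0 < phi w (2 * b)" by blast
      have m: "min 1 (2 * a) = 2 * a" "min 1 (2 * b) = 2 * b" using h True by auto
      have "phi (False # w) a = 0" "0 < phi (False # w) b" using w by (simp_all only: phi.simps m if_False)
      then show ?thesis by blast
    next
      case nb: False
      show ?thesis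
      proof (cases "1/2 \<le> a")
        case True
        have "1 < ((2 * b - 1) - (2 * a - 1)) * 2 ^ n" using h by (simp add: algebra_simps)
        then have "\<exists>w. phi w (2 * a - 1) = 0 \<and> 0 < phi w (2 * b - 1)"
          by (intro Suc.IH[rule_format]) (use h True in auto)
        then obtain w where w: "phi w (2 * a - 1) = 0" "0 < phi w (2 * b - 1)" by blast
        have m: "max 0 (2 * a - 1) = 2 * a - 1" "max 0 (2 * b - 1) = 2 * b - 1" using h True by auto
        have "phi (True # w) a = 0" "0 < phi (True # w) b" using w by (simp_all only: phi.simps m if_True)
        then show ?thesis by blast
      next
        case False
        have "phi [True] a = 0" "0 < phi [True] b" using nb False by (simp_all add: max_def)
        then show ?thesis by blast
      qed
    qed
  qed
qed

lemma sep: "0 \<le> a \<Longrightarrow> a < b \<Longrightarrow> b \<le> 1 \<Longrightarrow> \<exists>w. phi w a = 0 \<and> 0 < phi w b"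
proof -
  assume h: "0 \<le> a" "a < b" "b \<le> 1"
  obtain n where "1 / (b - a) < 2 ^ n" using real_arch_pow[of 2 "1 / (b - a)"] by auto
  then have "1 < (b - a) * 2 ^ n" using h by (simp add: field_simps)
  then show ?thesis using sep_n h by blast
qed

context mva begin

fun ap :: "bool list \<Rightarrow> 'a \<Rightarrow> 'a" where
  "ap [] x = x"
| "ap (b # w) x = ap w (if b then x \<odot> x else x \<oplus> x)"

lemma hom_add: "mv_hom_unit A h \<Longrightarrow> h (x \<oplus> y) = min 1 (h x + h y)" unfolding mv_hom_unit_def by blast
lemma hom_ng: "mv_hom_unit A h \<Longrightarrow> h (ng x) = 1 - h x" unfolding mv_hom_unit_def by blast
lemma hom_range: "mv_hom_unit A h \<Longrightarrow> 0 \<le> h x \<and> h x \<le> 1" unfolding mv_hom_unit_def by blast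
lemma hom_zr: "mv_hom_unit A h \<Longrightarrow> h zr = 0" unfolding mv_hom_unit_def by blast
lemma hom_od: "mv_hom_unit A h \<Longrightarrow> h (x \<odot> y) = max 0 (h x + h y - 1)"
  by (simp add: hom_add hom_ng min_def max_def)

lemma hom_ap: "mv_hom_unit A h \<Longrightarrow> h (ap w x) = phi w (h x)"
proof (induction w arbitrary: x)
  case Nil then show ?case by simp
next
  case (Cons b w)
  have e: "h (if b then x \<odot> x else x \<oplus> x) = (if b then max 0 (2 * h x - 1) else min 1 (2 * h x))"
    using hom_od[OF Cons.prems, of x x] hom_add[OF Cons.prems, of x x]
    by (cases b) (simp_all only: if_True if_False mult_2)
  have "h (ap (b # w) x) = phi w (h (if b then x \<odot> x else x \<oplus> x))"
    unfolding ap.simps by (rule Cons.IH[OF Cons.prems])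
  then show ?case unfolding e phi.simps .
qed

lemma hom_unique:
  assumes h1: "mv_hom_unit A h1" and h2: "mv_hom_unit A h2" and k: "{x. h1 x = 0} = {x. h2 x = 0}"
  shows "h1 = h2"
proof (rule ccontr)
  assume "h1 \<noteq> h2"
  then obtain x where "h1 x \<noteq> h2 x" by blast
  then consider "h1 x < h2 x" | "h2 x < h1 x" by linarith
  then show False
  proof cases
    case 1
    obtain w where w: "phi w (h1 x) = 0" "0 < phi w (h2 x)"
      using sep[OF _ 1] hom_range[OF h1] hom_range[OF h2] by blast
    have "h1 (ap w x) = 0" using w hom_ap[OF h1] by simp
    then have "h2 (ap w x) = 0" using k by blast
    then show False using w hom_ap[OF h2] by simp
  next
    case 2
    obtain w where w: "phi w (h2 x) = 0" "0 < phi w (h1 x)"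
      using sep[OF _ 2] hom_range[OF h1] hom_range[OF h2] by blast
    have "h2 (ap w x) = 0" using w hom_ap[OF h2] by simp
    then have "h1 (ap w x) = 0" using k by blast
    then show False using w hom_ap[OF h1] by simp
  qed
qed

definition hm :: "'a set \<Rightarrow> 'a \<Rightarrow> real" where
  "hm I = (THE h. mv_hom_unit A h \<and> {x. h x = 0} = I)"

lemma hm_prop:
  assumes "I \<in> MaxSpec A"
  shows "mv_hom_unit A (hm I) \<and> {x. hm I x = 0} = I"
proof -
  have "mxi A I" unfolding mxi_def mxi_axioms_def using mva_axioms assms by (simp add: MaxSpec_def)
  then have ex: "\<exists>h. mv_hom_unit A h \<and> {x. h x = 0} = I" by (rule mxi.exists_hom)
  have "\<exists>!h. mv_hom_unit A h \<and> {x. h x = 0} = I"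
    using ex hom_unique by blast
  then show ?thesis unfolding hm_def by (rule theI')
qed

lemma star_hm: "mv_star A b I = hm I b" unfolding mv_star_def hm_def by simp

lemma topsp: "topspace (MaxTop A) = MaxSpec A" unfolding MaxTop_def by auto

lemma basic_open: "openin (MaxTop A) {I \<in> MaxSpec A. a \<notin> I}"
  unfolding MaxTop_def by (rule topology_generated_by_Basis) blast

lemma upper_open: "openin (MaxTop A) {I \<in> topspace (MaxTop A). r < hm I b}"
proof (subst openin_subopen, intro ballI)
  fix I0 assume "I0 \<in> {I \<in> topspace (MaxTop A). r < hm I b}"
  then have I0: "I0 \<in> MaxSpec A" "r < hm I0 b" by (auto simp: topsp)
  show "\<exists>T. openin (MaxTop A) T \<and> I0 \<in> T \<and> T \<subseteq> {I \<in> topspace (MaxTop A). r < hm I b}"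
  proof (cases "r < 0")
    case True
    have "openin (MaxTop A) (MaxSpec A)" using openin_topspace[of "MaxTop A"] by (simp add: topsp)
    moreover have "MaxSpec A \<subseteq> {I \<in> topspace (MaxTop A). r < hm I b}"
    proof
      fix I assume I: "I \<in> MaxSpec A"
      have "0 \<le> hm I b" using hom_range conjunct1[OF hm_prop[OF I]] by blast
      then show "I \<in> {I \<in> topspace (MaxTop A). r < hm I b}" using True I by (simp add: topsp)
    qed
    ultimately show ?thesis using I0 by blast
  next
    case False
    have hb: "hm I0 b \<le> 1" using hm_prop[OF I0(1)] hom_range by blast
    obtain w where w: "phi w r = 0" "0 < phi w (hm I0 b)" using sep[of r "hm I0 b"] False I0 hb by auto
    define T where "T = {I \<in> MaxSpec A. ap w b \<notin> I}"
    have "openin (MaxTop A) T" unfolding T_def by (rule basic_open)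
    moreover have "I0 \<in> T"
    proof -
      have "hm I0 (ap w b) \<noteq> 0" using hom_ap hm_prop[OF I0(1)] w by simp
      then show ?thesis unfolding T_def using I0(1) hm_prop[OF I0(1)] by blast
    qed
    moreover have "T \<subseteq> {I \<in> topspace (MaxTop A). r < hm I b}"
    proof
      fix I assume "I \<in> T"
      then have I: "I \<in> MaxSpec A" "ap w b \<notin> I" unfolding T_def by auto
      have hp: "mv_hom_unit A (hm I)" "{x. hm I x = 0} = I" using hm_prop[OF I(1)] by auto
      have "hm I (ap w b) \<noteq> 0" using I(2) hp(2) by blast
      moreover have "0 \<le> hm I (ap w b)" using hom_range[OF hp(1)] by blast
      ultimately have pos: "0 < phi w (hm I b)" using hom_ap[OF hp(1)] by simp
      have "r < hm I b"
      proof (rule ccontr)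
        assume "\<not> r < hm I b"
        then have "phi w (hm I b) \<le> phi w r" by (intro phi_mono) simp
        then show False using pos w by simp
      qed
      then show "I \<in> {I \<in> topspace (MaxTop A). r < hm I b}" using I(1) by (simp add: topsp)
    qed
    ultimately show ?thesis by blast
  qed
qed

lemma hm_cont: "continuous_map (MaxTop A) euclidean (\<lambda>I. hm I b)"
  unfolding continuous_map_upper_lower_semicontinuous_lt
proof (intro conjI allI)
  fix r show "openin (MaxTop A) {I \<in> topspace (MaxTop A). r < hm I b}" by (rule upper_open)
next
  fix r
  have "{I \<in> topspace (MaxTop A). hm I b < r} = {I \<in> topspace (MaxTop A). 1 - r < hm I (ng b)}"
  proof (rule Collect_cong)
    fix I
    show "(I \<in> topspace (MaxTop A) \<and> hm I b < r) = (I \<in> topspace (MaxTop A) \<and> 1 - r < hm I (ng b))"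
    proof (cases "I \<in> MaxSpec A")
      case True
      have "hm I (ng b) = 1 - hm I b" using hom_ng conjunct1[OF hm_prop[OF True]] by blast
      then show ?thesis by auto
    next
      case False then show ?thesis by (simp add: topsp)
    qed
  qed
  then show "openin (MaxTop A) {I \<in> topspace (MaxTop A). hm I b < r}" using upper_open by simp
qed

end

lemma prob_state:
  assumes mM: "mv_algebra M" and mN: "mv_algebra N" and p: "prob_map M N p" and h: "mv_hom_unit N h"
  shows "mv_state M (\<lambda>a. h (p a))"
proof -
  have vM: "mva M" by (simp add: mva_def mM)
  have vN: "mva N" by (simp add: mva_def mN)
  have P1: "\<And>a b. p (mv_add M a b) = mv_add N (p a) (p (mv_inf M b (mv_neg M a)))"
    and P2: "\<And>a. p (mv_neg M a) = mv_neg N (p a)"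
    and P3: "p (mv_one M) = mv_one N" using p unfolding prob_map_def by blast+
  have hadd: "\<And>x y. h (mv_add N x y) = min 1 (h x + h y)" using mva.hom_add[OF vN h] .
  have hng: "\<And>x. h (mv_neg N x) = 1 - h x" using mva.hom_ng[OF vN h] .
  have hr: "\<And>x. 0 \<le> h x \<and> h x \<le> 1" using mva.hom_range[OF vN h] .
  have hz: "h (mv_zero N) = 0" using mva.hom_zr[OF vN h] .
  have mono: "h (p x) \<le> h (p y)" if lxy: "mv_add M (mv_neg M x) y = mv_neg M (mv_zero M)" for x y
  proof -
    obtain c where c: "mv_add M x c = y" using mva.lq_ex[OF vM, THEN iffD1, OF lxy] by (elim exE)
    have "h (p y) = h (p (mv_add M x c))" using c by simp
    also have "\<dots> = h (mv_add N (p x) (p (mv_inf M c (mv_neg M x))))" by (simp only: P1)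
    also have "\<dots> = min 1 (h (p x) + h (p (mv_inf M c (mv_neg M x))))" by (rule hadd)
    finally have "h (p y) = min 1 (h (p x) + h (p (mv_inf M c (mv_neg M x))))" .
    then show ?thesis using hr by simp
  qed
  show ?thesis unfolding mv_state_def
  proof (intro conjI allI impI)
    fix a show "0 \<le> h (p a)" "h (p a) \<le> 1" using hr by auto
  next
    show "h (p (mv_one M)) = 1" using P3 hng hz by (simp add: mv_one_def)
  next
    fix a b assume ab: "mv_odot M a b = mv_zero M"
    have "mv_add M (mv_neg M a) (mv_neg M b) = mv_neg M (mv_zero M)"
      using ab unfolding mv_odot_def by (metis mva.nn[OF vM])
    then have lba: "mv_add M (mv_neg M b) (mv_neg M a) = mv_neg M (mv_zero M)"
      by (simp add: mva.comm[OF vM])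
    have "mv_inf M b (mv_neg M a) = b"
      unfolding mv_inf_def mv_sup_def using mva.mt_eq[OF vM lba] .
    then have e: "p (mv_add M a b) = mv_add N (p a) (p b)" using P1 by simp
    have "mv_add M (mv_neg M b) (mv_neg M a) = mv_neg M (mv_zero M)" by (rule lba)
    then have "h (p b) \<le> h (p (mv_neg M a))" by (rule mono)
    then have "h (p a) + h (p b) \<le> 1" using P2 hng by simp
    then show "h (p (mv_add M a b)) = h (p a) + h (p b)" using e hadd by simp
  qed
qed

theorem lemma4p2:
  fixes M :: "'a mv" and N :: "'b mv"
  assumes "mv_algebra M" and "mv_algebra N"
  shows "(\<forall>p. prob_map M N p \<longrightarrow>
            continuous_map (MaxTop N) (top_of_set (St M)) (dual N p)) \<and>
         (semisimple N \<longrightarrow>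
            bij_betw (dual N) {p. prob_map M N p} (dual N ` {p. prob_map M N p}))"
proof (intro conjI allI impI)
  have vM: "mva M" by (simp add: mva_def assms)
  have vN: "mva N" by (simp add: mva_def assms)
  have dual_eq: "\<And>p I. I \<in> MaxSpec N \<Longrightarrow> dual N p I = (\<lambda>a. mva.hm N I (p a))"
    unfolding dual_def using mva.star_hm[OF vN] by simp
  {
    fix p assume p: "prob_map M N p"
    have c1: "continuous_map (MaxTop N) euclidean (\<lambda>I a. mva.hm N I (p a))"
      unfolding euclidean_product_topology[symmetric] continuous_map_componentwise_UNIV
      using mva.hm_cont[OF vN] by blast
    have c2: "continuous_map (MaxTop N) euclidean (dual N p)"
      by (rule continuous_map_eq[OF c1]) (simp add: dual_eq mva.topsp[OF vN])
    have c3: "dual N p \<in> topspace (MaxTop N) \<rightarrow> St M"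
    proof
      fix I assume "I \<in> topspace (MaxTop N)"
      then have I: "I \<in> MaxSpec N" by (simp add: mva.topsp[OF vN])
      have "mv_hom_unit N (mva.hm N I)" using mva.hm_prop[OF vN I] by blast
      then have "mv_state M (\<lambda>a. mva.hm N I (p a))" by (rule prob_state[OF assms p])
      then show "dual N p I \<in> St M" unfolding St_def dual_eq[OF I] by simp
    qed
    show "continuous_map (MaxTop N) (top_of_set (St M)) (dual N p)"
      unfolding continuous_map_in_subtopology using c2 c3 by blast
  }
  assume ss: "semisimple N"
  show "bij_betw (dual N) {p. prob_map M N p} (dual N ` {p. prob_map M N p})"
  proof (rule inj_on_imp_bij_betw, rule inj_onI)
    fix p q assume "p \<in> {p. prob_map M N p}" "q \<in> {p. prob_map M N p}" and d: "dual N p = dual N q"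
    show "p = q"
    proof
      fix a
      define x where "x = p a"
      define y where "y = q a"
      define u where "u = mv_neg N (mv_add N (mv_neg N x) (mv_neg N (mv_neg N y)))"
      define v where "v = mv_neg N (mv_add N (mv_neg N y) (mv_neg N (mv_neg N x)))"
      have "mv_add N u v \<in> \<Inter> (MaxSpec N)"
      proof
        fix I assume I: "I \<in> MaxSpec N"
        have hp: "mv_hom_unit N (mva.hm N I)" "{z. mva.hm N I z = 0} = I" using mva.hm_prop[OF vN I] by auto
        have "mva.hm N I x = dual N p I a" unfolding x_def dual_eq[OF I] by (rule refl)
        also have "\<dots> = dual N q I a" using d by simp
        also have "\<dots> = mva.hm N I y" unfolding y_def dual_eq[OF I] by (rule refl)
        finally have hxy: "mva.hm N I x = mva.hm N I y" .
        have "mva.hm N I (mv_add N u v) = 0"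
          unfolding u_def v_def using hxy mva.hom_add[OF vN hp(1)] mva.hom_ng[OF vN hp(1)]
          by (simp add: min_def)
        then show "mv_add N u v \<in> I" using hp(2) by blast
      qed
      then have uv: "mv_add N u v = mv_zero N" using ss unfolding semisimple_def by blast
      have u0: "u = mv_zero N"
        using mva.lq_zr_eq[OF vN] mva.lq_add[OF vN, of u v] uv by metis
      have v0: "v = mv_zero N"
        using mva.lq_zr_eq[OF vN] mva.lq_add2[OF vN, of v u] uv by metis
      have "mv_add N (mv_neg N x) y = mv_neg N (mv_zero N)"
        using u0 unfolding u_def using mva.lq_zr_iff[OF vN, of x y] by simp
      moreover have "mv_add N (mv_neg N y) x = mv_neg N (mv_zero N)"
        using v0 unfolding v_def using mva.lq_zr_iff[OF vN, of y x] by simp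
      ultimately have "x = y" by (rule mva.lq_antisym[OF vN])
      then show "p a = q a" unfolding x_def y_def .
    qed
  qed
qed

end
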